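(* Let $G$ be a graph on $n$ vertices that is not isomorphic to any of $K_n$, $\overline{K_n}$, $K_{a,n-a}$, or $\overline{K_{a,n-a}}$ for any integer $1\le a\le\lfloor n/2\rfloor$. Then \[ \operatorname{rank}(A_G+I)\cdot\operatorname{rank}(A_{\overline G}+I)\ \ge\ 3(n-1). \]
   Context: All graphs are simple (undirected, no loops or multiple edges). $A_G$ denotes the $n\times n$ adjacency matrix of $G$, $\overline{G}$ the complement of $G$, $I=I_n$ the $n\times n$ identity matrix, and $\operatorname{rank}$ is the rank over $\mathbb{R}$. $K_n$ is the complete graph on $n$ vertices, $\overline{K_n}$ the edgeless graph on $n$ vertices, and $K_{a,b}$ the complete bipartite graph with part sizes $a$ and $b$. *)

theory Defs
  imports "HOL-Analysis.Analysis"
begin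

text \<open>A simple graph on the finite vertex type 'v is a symmetric irreflexive
  relation E. The number of vertices is n = CARD('v).\<close>

definition simple_graph :: "('v \<Rightarrow> 'v \<Rightarrow> bool) \<Rightarrow> bool" where
  "simple_graph E \<longleftrightarrow> (\<forall>i j. E i j \<longleftrightarrow> E j i) \<and> (\<forall>i. \<not> E i i)"

definition compl_graph :: "('v \<Rightarrow> 'v \<Rightarrow> bool) \<Rightarrow> 'v \<Rightarrow> 'v \<Rightarrow> bool" where
  "compl_graph E i j \<longleftrightarrow> i \<noteq> j \<and> \<not> E i j"

definition adj_matrix :: "('v::finite \<Rightarrow> 'v \<Rightarrow> bool) \<Rightarrow> real^'v^'v" where
  "adj_matrix E = (\<chi> i j. if E i j then 1 else 0)"

definition complete_nat :: "nat \<Rightarrow> nat \<Rightarrow> nat \<Rightarrow> bool" where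
  "complete_nat n i j \<longleftrightarrow> i < n \<and> j < n \<and> i \<noteq> j"

definition empty_nat :: "nat \<Rightarrow> nat \<Rightarrow> nat \<Rightarrow> bool" where
  "empty_nat n i j \<longleftrightarrow> False"

text \<open>K_{a,n-a}: parts {0..<a} and {a..<n}.\<close>
definition bipartite_nat :: "nat \<Rightarrow> nat \<Rightarrow> nat \<Rightarrow> nat \<Rightarrow> bool" where
  "bipartite_nat a n i j \<longleftrightarrow> i < n \<and> j < n \<and> ((i < a) \<longleftrightarrow> \<not> (j < a))"

definition co_bipartite_nat :: "nat \<Rightarrow> nat \<Rightarrow> nat \<Rightarrow> nat \<Rightarrow> bool" where
  "co_bipartite_nat a n i j \<longleftrightarrow> i < n \<and> j < n \<and> i \<noteq> j \<and> \<not> bipartite_nat a n i j"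

definition iso_to :: "('v::finite \<Rightarrow> 'v \<Rightarrow> bool) \<Rightarrow> (nat \<Rightarrow> nat \<Rightarrow> bool) \<Rightarrow> bool" where
  "iso_to E H \<longleftrightarrow> (\<exists>f. bij_betw f (UNIV::'v set) {0..<CARD('v)} \<and> (\<forall>i j. E i j \<longleftrightarrow> H (f i) (f j)))"

end

theory Submission
  imports Defs
begin

lemma nullity:
  fixes M :: "real^'n^'n"
  shows "dim {x. M *v x = 0} + rank M = CARD('n)"
proof -
  have eq: "{x. M *v x = 0} = {y \<in> UNIV. \<forall>x \<in> span (rows M). orthogonal x y}"
  proof (intro set_eqI iffI)
    fix y assume "y \<in> {x. M *v x = 0}"
    then show "y \<in> {y \<in> UNIV. \<forall>x \<in> span (rows M). orthogonal x y}"
      using orthogonal_nullspace_rowspace orthogonal_commute by blast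
  next
    fix y assume y: "y \<in> {y \<in> UNIV. \<forall>x \<in> span (rows M). orthogonal x y}"
    have "(M *v y) $ k = 0" for k
    proof -
      have "row k M \<in> span (rows M)" by (auto simp: rows_def intro: span_base)
      then have "orthogonal (row k M) y" using y by blast
      then show ?thesis
        by (simp add: matrix_vector_mul_component orthogonal_def row_def vec_lambda_eta)
    qed
    then show "y \<in> {x. M *v x = 0}" by (simp add: vec_eq_iff)
  qed
  have "dim {y \<in> UNIV. \<forall>x \<in> span (rows M). orthogonal x y} + dim (span (rows M)) = dim (UNIV :: (real^'n) set)"
    by (rule dim_subspace_orthogonal_to_vectors) auto
  moreover have "dim (UNIV :: (real^'n) set) = CARD('n)"
    by (metis dim_UNIV dimension_def vec_dim_card dim_vec_eq)
  ultimately show ?thesis using eq by (simp add: row_rank_def)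
qed

lemma subspace_null: "subspace {x. (M::real^'n^'n) *v x = 0}"
  by (auto simp: subspace_def matrix_vector_right_distrib matrix_vector_mult_scaleR)

lemma core:
  fixes M :: "real^'n^'n"
  assumes "subspace X" "subspace Y" "\<forall>x\<in>X. inner x (M *v x) \<le> 0"
    "\<forall>y\<in>Y. y \<noteq> 0 \<longrightarrow> inner y (M *v y) > 0"
  shows "dim X + dim Y \<le> CARD('n)"
proof -
  have "X \<inter> Y = {0}"
  proof -
    have "x = 0" if "x \<in> X" "x \<in> Y" for x
      using assms(3,4) that by force
    then show ?thesis using assms(1,2) subspace_0 by blast
  qed
  then have "dim (X \<inter> Y) = 0" by simp
  moreover have "dim {x + y |x y. x \<in> X \<and> y \<in> Y} \<le> CARD('n)" by (rule dim_subset_UNIV_cart)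
  ultimately show ?thesis using dim_sums_Int[OF assms(1,2)] by linarith
qed

lemma dim_ext:
  fixes S :: "(real^'n) set"
  assumes "subspace S" "a \<notin> S" shows "dim (span (insert a S)) = dim S + 1"
proof -
  have "span S = S" by (metis assms(1) span_eq_iff)
  then have "a \<notin> span S" using assms(2) by (simp del: span_eq_iff)
  then show ?thesis by (metis dim_insert dim_span)
qed

lemma span_ext_elem:
  fixes S :: "(real^'n) set"
  assumes "subspace S" "x \<in> span (insert a S)"
  obtains z k where "z \<in> S" "x = z + k *\<^sub>R a"
proof -
  obtain k where "x - k *\<^sub>R a \<in> span S"
    using assms(2) span_insert[of a S] by blast
  moreover have "span S = S" by (metis assms(1) span_eq_iff)
  ultimately have "x - k *\<^sub>R a \<in> S" by (simp del: span_eq_iff)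
  then show ?thesis using that[of "x - k *\<^sub>R a" k] by simp
qed

lemma sym_transpose:
  fixes M :: "real^'n^'n"
  assumes "\<forall>i j. M$i$j = M$j$i" shows "transpose M = M"
  using assms by (simp add: transpose_def vec_eq_iff)

lemma qf_null:
  fixes M :: "real^'n^'n"
  assumes "\<forall>i j. M$i$j = M$j$i" "M *v z = 0"
  shows "inner (z + x) (M *v (z + x)) = inner x (M *v x)"
proof -
  have "inner z (M *v x) = inner (z v* M) x"
    by (simp add: dot_lmul_matrix)
  also have "z v* M = M *v z"
    by (metis sym_transpose[OF assms(1)] vector_transpose_matrix)
  finally have "inner z (M *v x) = 0" using assms(2) by simp
  then show ?thesis using assms
    by (simp add: matrix_vector_right_distrib inner_add_left)
qed

lemma coord_subspace: "subspace {y::real^'n. \<forall>k. k \<notin> S \<longrightarrow> y$k = 0}"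
  by (auto simp: subspace_def)

lemma coord_dim:
  fixes S :: "'n::finite set"
  shows "card S \<le> dim {y::real^'n. \<forall>k. k \<notin> S \<longrightarrow> y$k = 0}"
proof -
  let ?B = "(\<lambda>k. axis k (1::real)) ` S"
  have i: "independent ?B"
    by (rule independent_mono[OF independent_Basis]) auto
  have s: "?B \<subseteq> {y::real^'n. \<forall>k. k \<notin> S \<longrightarrow> y$k = 0}"
    by (auto simp: axis_def)
  have c: "card ?B = card S"
    by (rule card_image) (auto simp: inj_on_def axis_eq_axis)
  have "card ?B \<le> dim {y::real^'n. \<forall>k. k \<notin> S \<longrightarrow> y$k = 0}"
    by (rule independent_card_le_dim[OF s i])
  then show ?thesis using c by simp
qed

lemma qf_supp:
  fixes M :: "real^'n^'n"
  assumes "\<forall>k. k \<notin> S \<longrightarrow> x$k = 0"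
  shows "inner x (M *v x) = (\<Sum>i\<in>S. \<Sum>j\<in>S. x$i * M$i$j * x$j)"
proof -
  have "inner x (M *v x) = (\<Sum>i\<in>UNIV. x$i * (\<Sum>j\<in>UNIV. M$i$j * x$j))"
    by (simp add: inner_vec_def matrix_vector_mult_def)
  also have "\<dots> = (\<Sum>i\<in>S. x$i * (\<Sum>j\<in>UNIV. M$i$j * x$j))"
    by (rule sum.mono_neutral_right) (use assms in auto)
  also have "\<dots> = (\<Sum>i\<in>S. x$i * (\<Sum>j\<in>S. M$i$j * x$j))"
  proof (rule sum.cong[OF refl])
    fix i
    have "(\<Sum>j\<in>UNIV. M$i$j * x$j) = (\<Sum>j\<in>S. M$i$j * x$j)"
      by (rule sum.mono_neutral_right) (use assms in auto)
    then show "x$i * (\<Sum>j\<in>UNIV. M$i$j * x$j) = x$i * (\<Sum>j\<in>S. M$i$j * x$j)" by simp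
  qed
  also have "\<dots> = (\<Sum>i\<in>S. \<Sum>j\<in>S. x$i * M$i$j * x$j)"
    by (simp add: sum_distrib_left mult_ac)
  finally show ?thesis .
qed

lemma qf_scale:
  fixes M :: "real^'n^'n"
  shows "inner (k *\<^sub>R x) (M *v (k *\<^sub>R x)) = k * k * inner x (M *v x)"
  by (simp add: matrix_vector_mult_scaleR)

definition PM :: "('v::finite \<Rightarrow> 'v \<Rightarrow> bool) \<Rightarrow> real^'v^'v" where
  "PM E = adj_matrix E + mat 1"

definition P3 :: "('v \<Rightarrow> 'v \<Rightarrow> bool) \<Rightarrow> bool" where
  "P3 E \<longleftrightarrow> (\<exists>a b c. E a b \<and> E b c \<and> a \<noteq> c \<and> \<not> E a c)"

definition indep3 :: "('v \<Rightarrow> 'v \<Rightarrow> bool) \<Rightarrow> bool" where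
  "indep3 E \<longleftrightarrow> (\<exists>a b c. a \<noteq> b \<and> b \<noteq> c \<and> a \<noteq> c \<and> \<not> E a b \<and> \<not> E b c \<and> \<not> E a c)"

lemma PM_entry: "PM E $ i $ j = (if E i j then 1 else 0) + (if i = j then 1 else 0)"
  by (simp add: PM_def adj_matrix_def mat_def)

lemma PM_sym: "simple_graph E \<Longrightarrow> \<forall>i j. PM E $ i $ j = PM E $ j $ i"
  by (auto simp: PM_entry simple_graph_def)

lemma compl_simple: "simple_graph E \<Longrightarrow> simple_graph (compl_graph E)"
  by (auto simp: simple_graph_def compl_graph_def)

lemma compl_compl: "simple_graph E \<Longrightarrow> compl_graph (compl_graph E) = E"
  by (auto simp: simple_graph_def compl_graph_def fun_eq_iff)

lemma qf_sum:
  assumes "simple_graph E"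
  shows "inner y (PM E *v y) + inner y (PM (compl_graph E) *v y) = inner y y + (\<Sum>i\<in>UNIV. y$i)^2"
proof -
  have "PM E + PM (compl_graph E) = (\<chi> i j. 1) + mat 1"
    using assms by (auto simp: vec_eq_iff PM_entry compl_graph_def simple_graph_def mat_def)
  then have 1: "inner y (PM E *v y) + inner y (PM (compl_graph E) *v y) = inner y ((\<chi> i j. 1) *v y) + inner y y"
    by (simp add: matrix_vector_mult_add_rdistrib[symmetric] inner_add_right[symmetric])
      (simp add: matrix_vector_mult_add_rdistrib inner_add_right)
  have "inner y ((\<chi> i j. 1) *v y) = (\<Sum>i\<in>UNIV. y$i)^2"
  proof -
    have "inner y ((\<chi> i j. 1) *v y) = (\<Sum>i\<in>UNIV. y$i * (\<Sum>j\<in>UNIV. y$j))"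
      by (simp add: inner_vec_def matrix_vector_mult_def)
    also have "\<dots> = (\<Sum>i\<in>UNIV. y$i) * (\<Sum>j\<in>UNIV. y$j)"
      by (simp add: sum_distrib_right)
    finally show ?thesis by (simp add: power2_eq_square)
  qed
  with 1 show ?thesis by simp
qed


definition v3 :: "'v::finite \<Rightarrow> 'v \<Rightarrow> 'v \<Rightarrow> real \<Rightarrow> real \<Rightarrow> real \<Rightarrow> real^'v" where
  "v3 a b c p q r = (\<chi> k. if k = a then p else if k = b then q else if k = c then r else 0)"

lemma v3_supp: "\<forall>k. k \<notin> {a,b,c} \<longrightarrow> v3 a b c p q r $ k = 0"
  by (simp add: v3_def)

lemma neg_form:
  assumes "simple_graph F" "F a b" "F b c" "a \<noteq> c" "\<not> F a c"
  shows "inner (v3 a b c 1 (-1) 1) (PM F *v v3 a b c 1 (-1) 1) = -1"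
proof -
  have ab: "a \<noteq> b" "b \<noteq> c" using assms(1,2,3) by (auto simp: simple_graph_def)
  have s: "F b a" "F c b" "\<not> F c a" "\<And>x. \<not> F x x" using assms by (auto simp: simple_graph_def)
  show ?thesis
    apply (subst qf_supp[OF v3_supp])
    using ab assms(4,5) s assms(2,3)
    by (simp add: PM_entry v3_def)
qed

lemma neg_space:
  fixes F :: "'v::finite \<Rightarrow> 'v \<Rightarrow> bool"
  assumes "simple_graph F" "P3 F"
  shows "\<exists>X. subspace X \<and> CARD('v) - rank (PM F) + 1 \<le> dim X \<and> (\<forall>x\<in>X. inner x (PM F *v x) \<le> 0)"
proof -
  obtain a b c where abc: "F a b" "F b c" "a \<noteq> c" "\<not> F a c" using assms(2) by (auto simp: P3_def)
  define x0 where "x0 = v3 a b c 1 (-1) 1"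
  define N where "N = {x. PM F *v x = 0}"
  have f0: "inner x0 (PM F *v x0) = -1" unfolding x0_def by (rule neg_form[OF assms(1) abc])
  have sN: "subspace N" unfolding N_def by (rule subspace_null)
  have x0N: "x0 \<notin> N" using f0 by (auto simp: N_def)
  have dN: "dim N + rank (PM F) = CARD('v)" unfolding N_def by (rule nullity)
  have dX: "dim (span (insert x0 N)) = dim N + 1" by (rule dim_ext[OF sN x0N])
  have "\<forall>x\<in>span (insert x0 N). inner x (PM F *v x) \<le> 0"
  proof
    fix x assume "x \<in> span (insert x0 N)"
    then obtain z k where z: "z \<in> N" "x = z + k *\<^sub>R x0" by (rule span_ext_elem[OF sN])
    have "inner x (PM F *v x) = inner (k *\<^sub>R x0) (PM F *v (k *\<^sub>R x0))"
      using z by (simp add: qf_null[OF PM_sym[OF assms(1)]] N_def)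
    also have "\<dots> = - (k * k)" using qf_scale[of k x0 "PM F"] f0 by simp
    finally show "inner x (PM F *v x) \<le> 0" by simp
  qed
  moreover have "CARD('v) - rank (PM F) + 1 \<le> dim (span (insert x0 N))" using dX dN by simp
  ultimately show ?thesis using subspace_span by blast
qed

lemma sum_null:
  fixes E :: "'v::finite \<Rightarrow> 'v \<Rightarrow> bool"
  assumes "simple_graph E" "\<not> P3 E" "PM E *v z = 0"
  shows "(\<Sum>i\<in>UNIV. z$i) = 0"
proof -
  define Nb where "Nb j = {i. i = j \<or> E i j}" for j
  define c where "c j = real (card (Nb j))" for j
  have sym: "E i j \<longleftrightarrow> E j i" for i j using assms(1) by (auto simp: simple_graph_def)
  have irr: "\<not> E i i" for i using assms(1) by (auto simp: simple_graph_def)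
  have PMNb: "PM E $ i $ j = (if i \<in> Nb j then 1 else 0)" for i j
    using irr by (auto simp: PM_entry Nb_def)
  have Nb_eq: "Nb i = Nb j" if "i \<in> Nb j" for i j
  proof -
    have tr: "E x w" if "E x y" "E y w" "x \<noteq> w" for x y w
      using assms(2) that by (auto simp: P3_def)
    show ?thesis using that unfolding Nb_def
      by (auto simp: sym intro: tr)
  qed
  have cpos: "c j > 0" for j
  proof -
    have "j \<in> Nb j" by (simp add: Nb_def)
    then have "Nb j \<noteq> {}" by auto
    then show ?thesis by (simp add: c_def card_gt_0_iff)
  qed
  have col: "(\<Sum>i\<in>UNIV. PM E $ i $ j / c i) = 1" for j
  proof -
    have "(\<Sum>i\<in>UNIV. PM E $ i $ j / c i) = (\<Sum>i\<in>UNIV. if i \<in> Nb j then 1 / c i else 0)"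
      by (rule sum.cong[OF refl]) (simp add: PMNb)
    also have "\<dots> = (\<Sum>i\<in>Nb j. 1 / c i)"
      using sum.inter_filter[where A=UNIV and P="\<lambda>i. i \<in> Nb j" and g="\<lambda>i. 1 / c i"] by simp
    also have "\<dots> = (\<Sum>i\<in>Nb j. 1 / c j)"
      by (rule sum.cong[OF refl]) (simp add: c_def Nb_eq)
    also have "\<dots> = 1" using cpos[of j] by (simp add: c_def) auto
    finally show ?thesis .
  qed
  have "0 = (\<Sum>i\<in>UNIV. (PM E *v z)$i / c i)" using assms(3) by simp
  also have "\<dots> = (\<Sum>i\<in>UNIV. \<Sum>j\<in>UNIV. PM E $ i $ j * z$j / c i)"
    by (simp add: matrix_vector_mult_def sum_divide_distrib)
  also have "\<dots> = (\<Sum>j\<in>UNIV. \<Sum>i\<in>UNIV. PM E $ i $ j * z$j / c i)"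
    by (rule sum.swap)
  also have "\<dots> = (\<Sum>j\<in>UNIV. z$j * (\<Sum>i\<in>UNIV. PM E $ i $ j / c i))"
    by (simp add: sum_distrib_left mult.commute)
  also have "\<dots> = (\<Sum>j\<in>UNIV. z$j)" by (simp add: col)
  finally show ?thesis by simp
qed

lemma pos_space:
  fixes E :: "'v::finite \<Rightarrow> 'v \<Rightarrow> bool"
  assumes "simple_graph E" "\<not> P3 E"
  shows "\<exists>Y. subspace Y \<and> CARD('v) - rank (PM E) + 1 \<le> dim Y \<and>
    (\<forall>y\<in>Y. inner y (PM E *v y) \<le> (\<Sum>i\<in>UNIV. y$i)^2)"
proof -
  obtain v :: 'v where True by simp
  define x0 :: "real^'v" where "x0 = axis v 1"
  define N where "N = {x. PM E *v x = 0}"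
  have irr: "\<not> E i i" for i using assms(1) by (auto simp: simple_graph_def)
  have f0: "inner x0 (PM E *v x0) = 1"
    using irr by (simp add: x0_def matrix_vector_mult_basis inner_axis' column_def PM_entry)
  have s0: "(\<Sum>i\<in>UNIV. x0$i) = 1"
    by (simp add: x0_def axis_def)
  have sN: "subspace N" unfolding N_def by (rule subspace_null)
  have x0N: "x0 \<notin> N" using f0 by (auto simp: N_def)
  have dN: "dim N + rank (PM E) = CARD('v)" unfolding N_def by (rule nullity)
  have dX: "dim (span (insert x0 N)) = dim N + 1" by (rule dim_ext[OF sN x0N])
  have "\<forall>x\<in>span (insert x0 N). inner x (PM E *v x) \<le> (\<Sum>i\<in>UNIV. x$i)^2"
  proof
    fix x assume "x \<in> span (insert x0 N)"
    then obtain z k where z: "z \<in> N" "x = z + k *\<^sub>R x0" by (rule span_ext_elem[OF sN])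
    have "inner x (PM E *v x) = inner (k *\<^sub>R x0) (PM E *v (k *\<^sub>R x0))"
      using z by (simp add: qf_null[OF PM_sym[OF assms(1)]] N_def)
    also have "\<dots> = k * k" using qf_scale[of k x0 "PM E"] f0 by simp
    finally have 1: "inner x (PM E *v x) = k * k" .
    have "(\<Sum>i\<in>UNIV. z$i) = 0" using sum_null[OF assms] z(1) by (simp add: N_def)
    then have "(\<Sum>i\<in>UNIV. x$i) = k" using z(2) s0
      by (simp add: sum.distrib sum_distrib_left[symmetric])
    with 1 show "inner x (PM E *v x) \<le> (\<Sum>i\<in>UNIV. x$i)^2" by (simp add: power2_eq_square)
  qed
  moreover have "CARD('v) - rank (PM E) + 1 \<le> dim (span (insert x0 N))" using dX dN by simp
  ultimately show ?thesis using subspace_span by blast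
qed


lemma rank_le_card: "rank (M::real^'n^'n) \<le> CARD('n)"
  using rank_bound[of M] by simp

lemma RS:
  fixes E :: "'v::finite \<Rightarrow> 'v \<Rightarrow> bool"
  assumes "simple_graph E" "P3 (compl_graph E)"
  shows "CARD('v) + 2 \<le> rank (PM E) + rank (PM (compl_graph E))"
proof -
  let ?F = "compl_graph E"
  have sF: "simple_graph ?F" by (rule compl_simple[OF assms(1)])
  have rE: "rank (PM E) \<le> CARD('v)" and rF: "rank (PM ?F) \<le> CARD('v)" by (rule rank_le_card)+
  show ?thesis
  proof (cases "P3 E")
    case True
    obtain X where X: "subspace X" "CARD('v) - rank (PM E) + 1 \<le> dim X" "\<forall>x\<in>X. inner x (PM E *v x) \<le> 0"
      using neg_space[OF assms(1) True] by blast
    obtain Y where Y: "subspace Y" "CARD('v) - rank (PM ?F) + 1 \<le> dim Y" "\<forall>y\<in>Y. inner y (PM ?F *v y) \<le> 0"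
      using neg_space[OF sF assms(2)] by blast
    have "\<forall>y\<in>Y. y \<noteq> 0 \<longrightarrow> inner y (PM E *v y) > 0"
    proof (intro ballI impI)
      fix y assume "y \<in> Y" "y \<noteq> 0"
      then have "inner y (PM ?F *v y) \<le> 0" "inner y y > 0" using Y(3) by auto
      moreover have "(\<Sum>i\<in>UNIV. y$i)^2 \<ge> 0" by simp
      ultimately show "inner y (PM E *v y) > 0" using qf_sum[OF assms(1), of y] by linarith
    qed
    from core[OF X(1) Y(1) X(3) this] have "dim X + dim Y \<le> CARD('v)" .
    then show ?thesis using X(2) Y(2) rE rF by arith
  next
    case False
    obtain X where X: "subspace X" "CARD('v) - rank (PM ?F) + 1 \<le> dim X" "\<forall>x\<in>X. inner x (PM ?F *v x) \<le> 0"
      using neg_space[OF sF assms(2)] by blast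
    obtain Y where Y: "subspace Y" "CARD('v) - rank (PM E) + 1 \<le> dim Y"
        "\<forall>y\<in>Y. inner y (PM E *v y) \<le> (\<Sum>i\<in>UNIV. y$i)^2"
      using pos_space[OF assms(1) False] by blast
    have "\<forall>y\<in>Y. y \<noteq> 0 \<longrightarrow> inner y (PM ?F *v y) > 0"
    proof (intro ballI impI)
      fix y assume "y \<in> Y" "y \<noteq> 0"
      then have "inner y (PM E *v y) \<le> (\<Sum>i\<in>UNIV. y$i)^2" "inner y y > 0" using Y(3) by auto
      then show "inner y (PM ?F *v y) > 0" using qf_sum[OF assms(1), of y] by linarith
    qed
    from core[OF X(1) Y(1) X(3) this] have "dim X + dim Y \<le> CARD('v)" .
    then show ?thesis using X(2) Y(2) rE rF by arith
  qed
qed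

lemma R3:
  fixes F :: "'v::finite \<Rightarrow> 'v \<Rightarrow> bool"
  assumes "simple_graph F" "P3 F \<or> indep3 F"
  shows "3 \<le> rank (PM F)"
proof -
  have rF: "rank (PM F) \<le> CARD('v)" by (rule rank_le_card)
  have irr: "\<not> F i i" for i using assms(1) by (auto simp: simple_graph_def)
  have sym: "F i j \<longleftrightarrow> F j i" for i j using assms(1) by (auto simp: simple_graph_def)
  show ?thesis
  proof (cases "P3 F")
    case True
    obtain X where X: "subspace X" "CARD('v) - rank (PM F) + 1 \<le> dim X" "\<forall>x\<in>X. inner x (PM F *v x) \<le> 0"
      using neg_space[OF assms(1) True] by blast
    obtain a b c where abc: "F a b" "F b c" "a \<noteq> c" "\<not> F a c" using True by (auto simp: P3_def)
    let ?Y = "{y::real^'v. \<forall>k. k \<notin> {a,c} \<longrightarrow> y$k = 0}"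
    have "\<forall>y\<in>?Y. y \<noteq> 0 \<longrightarrow> inner y (PM F *v y) > 0"
    proof (intro ballI impI)
      fix y assume y: "y \<in> ?Y" "y \<noteq> 0"
      have "inner y (PM F *v y) = y$a * y$a + y$c * y$c"
        apply (subst qf_supp[of "{a,c}"])
        using y(1) abc(3,4) irr sym[of a c] by (auto simp: PM_entry)
      moreover have "y$a \<noteq> 0 \<or> y$c \<noteq> 0"
      proof (rule ccontr)
        assume "\<not> (y$a \<noteq> 0 \<or> y$c \<noteq> 0)"
        then have "y = 0" using y(1) by (auto simp: vec_eq_iff)
        then show False using y(2) by simp
      qed
      ultimately show "inner y (PM F *v y) > 0" by (simp add: sum_squares_gt_zero_iff)
    qed
    from core[OF X(1) coord_subspace X(3) this] have "dim X + dim ?Y \<le> CARD('v)" .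
    moreover have "card {a,c} \<le> dim ?Y" by (rule coord_dim)
    moreover have "card {a,c} = 2" using abc(3) by simp
    ultimately show ?thesis using X(2) rF by arith
  next
    case False
    then obtain a b c where abc: "a \<noteq> b" "b \<noteq> c" "a \<noteq> c" "\<not> F a b" "\<not> F b c" "\<not> F a c"
      using assms(2) by (auto simp: indep3_def)
    let ?N = "{x. PM F *v x = 0}"
    let ?Y = "{y::real^'v. \<forall>k. k \<notin> {a,b,c} \<longrightarrow> y$k = 0}"
    have "\<forall>y\<in>?Y. y \<noteq> 0 \<longrightarrow> inner y (PM F *v y) > 0"
    proof (intro ballI impI)
      fix y assume y: "y \<in> ?Y" "y \<noteq> 0"
      have "inner y (PM F *v y) = y$a * y$a + y$b * y$b + y$c * y$c"
        apply (subst qf_supp[of "{a,b,c}"])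
        using y(1) abc irr sym[of a b] sym[of b c] sym[of a c] by (auto simp: PM_entry)
      moreover have "y$a \<noteq> 0 \<or> y$b \<noteq> 0 \<or> y$c \<noteq> 0"
      proof (rule ccontr)
        assume "\<not> (y$a \<noteq> 0 \<or> y$b \<noteq> 0 \<or> y$c \<noteq> 0)"
        then have "y = 0" using y(1) by (auto simp: vec_eq_iff)
        then show False using y(2) by simp
      qed
      ultimately show "inner y (PM F *v y) > 0"
        by (smt (verit) not_real_square_gt_zero zero_le_square)
    qed
    moreover have "\<forall>x\<in>?N. inner x (PM F *v x) \<le> 0" by simp
    ultimately have "dim ?N + dim ?Y \<le> CARD('v)" using core[OF subspace_null coord_subspace] by blast
    moreover have "card {a,b,c} \<le> dim ?Y" by (rule coord_dim)
    moreover have "card {a,b,c} = 3" using abc(1-3) by simp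
    moreover have "dim ?N + rank (PM F) = CARD('v)" by (rule nullity)
    ultimately show ?thesis using rF by arith
  qed
qed


lemma G1:
  assumes "simple_graph E" "\<not> P3 E" "\<not> P3 (compl_graph E)"
  shows "(\<forall>i j. i \<noteq> j \<longrightarrow> E i j) \<or> (\<forall>i j. \<not> E i j)"
proof (rule ccontr)
  assume H: "\<not> ((\<forall>i j. i \<noteq> j \<longrightarrow> E i j) \<or> (\<forall>i j. \<not> E i j))"
  then obtain a b where ab: "E a b" by blast
  have sym: "E i j \<longleftrightarrow> E j i" for i j using assms(1) by (auto simp: simple_graph_def)
  have irr: "\<not> E i i" for i using assms(1) by (auto simp: simple_graph_def)
  have tr: "E x w" if "E x y" "E y w" "x \<noteq> w" for x y w
    using assms(2) that by (auto simp: P3_def)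
  have cov: "E x y \<or> E y z" if "E x z" "y \<noteq> x" "y \<noteq> z" for x y z
  proof (rule ccontr)
    assume "\<not> (E x y \<or> E y z)"
    then have "compl_graph E x y" "compl_graph E y z" "\<not> compl_graph E x z"
      using that by (auto simp: compl_graph_def)
    moreover have "x \<noteq> z" using that(1) irr by auto
    ultimately have "P3 (compl_graph E)" unfolding P3_def by blast
    then show False using assms(3) by simp
  qed
  have aa: "E y a" if "y \<noteq> a" for y
  proof (cases "y = b")
    case True then show ?thesis using ab sym by simp
  next
    case False
    then have "E a y \<or> E y b" using cov[OF ab] that by simp
    then show ?thesis
    proof
      assume "E a y" then show ?thesis using sym by simp
    next
      assume "E y b" then show ?thesis using tr[of y b a] ab sym that by simp
    qed
  qed
  have "\<forall>i j. i \<noteq> j \<longrightarrow> E i j"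
  proof (intro allI impI)
    fix i j :: 'a assume "i \<noteq> j"
    show "E i j"
    proof (cases "i = a")
      case True then show ?thesis using aa[of j] \<open>i \<noteq> j\<close> sym by simp
    next
      case False
      show ?thesis
      proof (cases "j = a")
        case True then show ?thesis using aa[of i] False by simp
      next
        case False2: False
        have "E i a" "E a j" using aa[of i] aa[of j] False False2 sym by auto
        then show ?thesis using tr \<open>i \<noteq> j\<close> by blast
      qed
    qed
  qed
  then show False using H by blast
qed

lemma G2:
  assumes "simple_graph F" "\<not> P3 F" "\<not> indep3 F" "\<not> (\<forall>i j. i \<noteq> j \<longrightarrow> F i j)"
  shows "\<exists>S x y. x \<in> S \<and> y \<notin> S \<and> (\<forall>i j. F i j \<longleftrightarrow> (i \<noteq> j \<and> (i \<in> S \<longleftrightarrow> j \<in> S)))"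
proof -
  have sym: "F i j \<longleftrightarrow> F j i" for i j using assms(1) by (auto simp: simple_graph_def)
  have irr: "\<not> F i i" for i using assms(1) by (auto simp: simple_graph_def)
  have tr: "F x w" if "F x y" "F y w" "x \<noteq> w" for x y w
    using assms(2) that by (auto simp: P3_def)
  obtain x y where xy: "x \<noteq> y" "\<not> F x y" using assms(4) by blast
  define S where "S = {z. z = x \<or> F z x}"
  have xS: "x \<in> S" by (simp add: S_def)
  have yS: "y \<notin> S" using xy sym by (auto simp: S_def)
  have notS: "z \<notin> S \<longleftrightarrow> (z = y \<or> F z y)" for z
  proof
    assume "z \<notin> S"
    then have "z \<noteq> x" "\<not> F z x" by (auto simp: S_def)
    show "z = y \<or> F z y"
    proof (rule ccontr)
      assume "\<not> (z = y \<or> F z y)"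
      then have "indep3 F" unfolding indep3_def
        using \<open>z \<noteq> x\<close> \<open>\<not> F z x\<close> xy sym by blast
      then show False using assms(3) by simp
    qed
  next
    assume "z = y \<or> F z y"
    then show "z \<notin> S"
    proof
      assume "z = y" then show ?thesis using yS by simp
    next
      assume zy: "F z y"
      show ?thesis
      proof
        assume "z \<in> S"
        then have "z = x \<or> F z x" by (simp add: S_def)
        then show False
        proof
          assume "z = x" then show False using zy xy by simp
        next
          assume "F z x" then have "F x y" using tr[of x z y] zy sym xy by simp
          then show False using xy by simp
        qed
      qed
    qed
  qed
  have inS: "z \<in> S \<longleftrightarrow> (z = x \<or> F z x)" for z by (simp add: S_def)
  have key: False if Fpq: "F p q" and pS: "p \<in> S" and qS: "q \<notin> S" for p q
  proof -
    have "F x q \<or> x = q"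
    proof (cases "p = x")
      case True then show ?thesis using Fpq by simp
    next
      case False
      then have "F x p" using pS inS sym by auto
      then show ?thesis using tr[of x p q] Fpq by auto
    qed
    then have Fxq: "F x q" using qS xS by auto
    have "q = y \<or> F q y" using qS notS by blast
    then have "F x y"
    proof
      assume "q = y" then show ?thesis using Fxq by simp
    next
      assume "F q y" then show ?thesis using tr[of x q y] Fxq xy(1) by simp
    qed
    then show False using xy(2) by simp
  qed
  have samecl: "F i j" if "i \<noteq> j" "i = w \<or> F i w" "j = w \<or> F j w" for i j w
  proof (cases "i = w")
    case True then show ?thesis using that sym by auto
  next
    case False
    then have Fiw: "F i w" using that by auto
    show ?thesis
    proof (cases "j = w")
      case True then show ?thesis using Fiw by simp
    next
      case False
      then have "F w j" using that sym by auto
      then show ?thesis using tr[of i w j] Fiw that(1) by simp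
    qed
  qed
  have "\<forall>i j. F i j \<longleftrightarrow> (i \<noteq> j \<and> (i \<in> S \<longleftrightarrow> j \<in> S))"
  proof (intro allI iffI)
    fix i j assume Fij: "F i j"
    then have ij: "i \<noteq> j" using irr by auto
    have Fji: "F j i" using Fij sym by simp
    have "i \<in> S \<longleftrightarrow> j \<in> S" using key[OF Fij] key[OF Fji] by blast
    then show "i \<noteq> j \<and> (i \<in> S \<longleftrightarrow> j \<in> S)" using ij by simp
  next
    fix i j assume H: "i \<noteq> j \<and> (i \<in> S \<longleftrightarrow> j \<in> S)"
    show "F i j"
    proof (cases "i \<in> S")
      case True
      then have "i = x \<or> F i x" "j = x \<or> F j x" using H inS by auto
      then show ?thesis using H samecl by blast
    next
      case False
      then have "i = y \<or> F i y" "j = y \<or> F j y" using H notS by auto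
      then show ?thesis using H samecl by blast
    qed
  qed
  then show ?thesis using xS yS by blast
qed

lemma Bij:
  fixes S :: "'v::finite set"
  assumes "x \<in> S" "y \<notin> S"
  shows "\<exists>a f. 1 \<le> a \<and> a \<le> CARD('v) div 2 \<and> bij_betw f UNIV {0..<CARD('v)} \<and>
     (\<forall>i j. ((f i < a) \<longleftrightarrow> (f j < a)) \<longleftrightarrow> (i \<in> S \<longleftrightarrow> j \<in> S))"
proof -
  define n where "n = CARD('v)"
  define T where "T = (if 2 * card S \<le> n then S else - S)"
  have cS: "card S \<le> n" by (simp add: n_def card_mono)
  have cCg: "card (- A) = n - card A" for A :: "'v set"
    by (simp add: n_def Compl_eq_Diff_UNIV card_Diff_subset)
  have cC: "card (- T) = n - card T" by (rule cCg)
  have Tne: "T \<noteq> {}" using assms by (auto simp: T_def)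
  have T1: "1 \<le> card T" using Tne by (simp add: Suc_le_eq card_gt_0_iff)
  have T2: "card T \<le> n div 2"
  proof (cases "2 * card S \<le> n")
    case True then show ?thesis by (simp add: T_def)
  next
    case False
    then have "card T = n - card S" by (simp add: T_def cCg)
    then show ?thesis using False cS by simp
  qed
  have TS: "(i \<in> T \<longleftrightarrow> j \<in> T) \<longleftrightarrow> (i \<in> S \<longleftrightarrow> j \<in> S)" for i j by (auto simp: T_def)
  define a where "a = card T"
  have an: "a \<le> n" using T2 by (simp add: a_def)
  obtain g where g: "bij_betw g T {0..<a}" using ex_bij_betw_finite_nat[of T] by (auto simp: a_def)
  have "card (- T) = card {a..<n}" using cC by (simp add: a_def)
  then obtain h where h: "bij_betw h (- T) {a..<n}"
    using finite_same_card_bij[of "- T" "{a..<n}"] by auto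
  define f where "f i = (if i \<in> T then g i else h i)" for i
  have fg: "bij_betw f T {0..<a}" using g by (rule bij_betw_cong[THEN iffD1, rotated]) (simp add: f_def)
  have fh: "bij_betw f (- T) {a..<n}" using h by (rule bij_betw_cong[THEN iffD1, rotated]) (simp add: f_def)
  have "bij_betw f (T \<union> - T) ({0..<a} \<union> {a..<n})"
    by (rule bij_betw_combine[OF fg fh]) auto
  moreover have "{0..<a} \<union> {a..<n} = {0..<n}" using an by auto
  ultimately have bf: "bij_betw f UNIV {0..<n}" by simp
  have fa: "f i < a \<longleftrightarrow> i \<in> T" for i
  proof (cases "i \<in> T")
    case True then show ?thesis using bij_betwE[OF fg] by auto
  next
    case False
    then have "f i \<in> {a..<n}" using bij_betwE[OF fh] by simp
    then show ?thesis using False by simp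
  qed
  have "\<forall>i j. ((f i < a) \<longleftrightarrow> (f j < a)) \<longleftrightarrow> (i \<in> S \<longleftrightarrow> j \<in> S)"
    using fa TS by simp
  then show ?thesis
    using T1 T2 bf unfolding a_def n_def by blast
qed

lemma iso_complete:
  fixes E :: "'v::finite \<Rightarrow> 'v \<Rightarrow> bool"
  assumes "simple_graph E" "\<forall>i j. i \<noteq> j \<longrightarrow> E i j"
  shows "iso_to E (complete_nat CARD('v))"
proof -
  obtain f where f: "bij_betw f (UNIV::'v set) {0..<CARD('v)}"
    using ex_bij_betw_finite_nat[of "UNIV::'v set"] by auto
  have "E i j \<longleftrightarrow> complete_nat CARD('v) (f i) (f j)" for i j
  proof -
    have "f i < CARD('v)" "f j < CARD('v)" using bij_betwE[OF f] by auto
    moreover have "f i = f j \<longleftrightarrow> i = j" using f by (auto simp: bij_betw_def inj_on_def)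
    moreover have "E i j \<longleftrightarrow> i \<noteq> j" using assms by (auto simp: simple_graph_def)
    ultimately show ?thesis by (auto simp: complete_nat_def)
  qed
  then show ?thesis using f by (auto simp: iso_to_def)
qed

lemma iso_empty:
  fixes E :: "'v::finite \<Rightarrow> 'v \<Rightarrow> bool"
  assumes "\<forall>i j. \<not> E i j"
  shows "iso_to E (empty_nat CARD('v))"
proof -
  obtain f where f: "bij_betw f (UNIV::'v set) {0..<CARD('v)}"
    using ex_bij_betw_finite_nat[of "UNIV::'v set"] by auto
  then show ?thesis using assms by (auto simp: iso_to_def empty_nat_def)
qed

lemma iso_cobip:
  fixes E :: "'v::finite \<Rightarrow> 'v \<Rightarrow> bool"
  assumes "x \<in> S" "y \<notin> S" "\<forall>i j. E i j \<longleftrightarrow> (i \<noteq> j \<and> (i \<in> S \<longleftrightarrow> j \<in> S))"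
  shows "\<exists>a. 1 \<le> a \<and> a \<le> CARD('v) div 2 \<and> iso_to E (co_bipartite_nat a CARD('v))"
proof -
  obtain a f where af: "1 \<le> a" "a \<le> CARD('v) div 2" "bij_betw f UNIV {0..<CARD('v)}"
     "\<forall>i j. ((f i < a) \<longleftrightarrow> (f j < a)) \<longleftrightarrow> (i \<in> S \<longleftrightarrow> j \<in> S)"
    using Bij[OF assms(1,2)] by blast
  have "E i j \<longleftrightarrow> co_bipartite_nat a CARD('v) (f i) (f j)" for i j
  proof -
    have "f i < CARD('v)" "f j < CARD('v)" using bij_betwE[OF af(3)] by auto
    moreover have "f i = f j \<longleftrightarrow> i = j" using af(3) by (auto simp: bij_betw_def inj_on_def)
    moreover have "((f i < a) \<longleftrightarrow> (f j < a)) \<longleftrightarrow> (i \<in> S \<longleftrightarrow> j \<in> S)" using af(4) by blast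
    moreover have "E i j \<longleftrightarrow> (i \<noteq> j \<and> (i \<in> S \<longleftrightarrow> j \<in> S))" using assms(3) by blast
    ultimately show ?thesis unfolding co_bipartite_nat_def bipartite_nat_def by auto
  qed
  then show ?thesis using af by (auto simp: iso_to_def)
qed

lemma iso_bip:
  fixes E :: "'v::finite \<Rightarrow> 'v \<Rightarrow> bool"
  assumes "x \<in> S" "y \<notin> S" "\<forall>i j. E i j \<longleftrightarrow> \<not> (i \<in> S \<longleftrightarrow> j \<in> S)"
  shows "\<exists>a. 1 \<le> a \<and> a \<le> CARD('v) div 2 \<and> iso_to E (bipartite_nat a CARD('v))"
proof -
  obtain a f where af: "1 \<le> a" "a \<le> CARD('v) div 2" "bij_betw f UNIV {0..<CARD('v)}"
     "\<forall>i j. ((f i < a) \<longleftrightarrow> (f j < a)) \<longleftrightarrow> (i \<in> S \<longleftrightarrow> j \<in> S)"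
    using Bij[OF assms(1,2)] by blast
  have "E i j \<longleftrightarrow> bipartite_nat a CARD('v) (f i) (f j)" for i j
  proof -
    have "f i < CARD('v)" "f j < CARD('v)" using bij_betwE[OF af(3)] by auto
    moreover have "((f i < a) \<longleftrightarrow> (f j < a)) \<longleftrightarrow> (i \<in> S \<longleftrightarrow> j \<in> S)" using af(4) by blast
    moreover have "E i j \<longleftrightarrow> \<not> (i \<in> S \<longleftrightarrow> j \<in> S)" using assms(3) by blast
    ultimately show ?thesis unfolding bipartite_nat_def by auto
  qed
  then show ?thesis using af by (auto simp: iso_to_def)
qed


theorem theorem4p3:
  fixes E :: "'v::finite \<Rightarrow> 'v \<Rightarrow> bool"
  assumes "simple_graph E"
    and "\<not> iso_to E (complete_nat CARD('v))"
    and "\<not> iso_to E (empty_nat CARD('v))"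
    and "\<And>a. 1 \<le> a \<Longrightarrow> a \<le> CARD('v) div 2 \<Longrightarrow> \<not> iso_to E (bipartite_nat a CARD('v))"
    and "\<And>a. 1 \<le> a \<Longrightarrow> a \<le> CARD('v) div 2 \<Longrightarrow> \<not> iso_to E (co_bipartite_nat a CARD('v))"
  shows "rank (adj_matrix E + mat 1) * rank (adj_matrix (compl_graph E) + mat 1)
           \<ge> 3 * (CARD('v) - 1)"
proof -
  let ?F = "compl_graph E"
  let ?n = "CARD('v)"
  have sF: "simple_graph ?F" by (rule compl_simple[OF assms(1)])
  have cc: "compl_graph ?F = E" by (rule compl_compl[OF assms(1)])
  have notcomplete: "\<not> (\<forall>i j. i \<noteq> j \<longrightarrow> E i j)"
    using assms(2) iso_complete[OF assms(1)] by blast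
  have notempty: "\<not> (\<forall>i j. \<not> E i j)"
    using assms(3) iso_empty by blast
  have rs: "?n + 2 \<le> rank (PM E) + rank (PM ?F)"
  proof (cases "P3 ?F")
    case True then show ?thesis by (rule RS[OF assms(1)])
  next
    case False
    show ?thesis
    proof (cases "P3 E")
      case True
      then have "P3 (compl_graph ?F)" using cc by simp
      from RS[OF sF this] show ?thesis using cc by simp
    next
      case False2: False
      from G1[OF assms(1) False2 False] notcomplete notempty show ?thesis by blast
    qed
  qed
  have r3: "3 \<le> rank (PM E)"
  proof (cases "P3 E \<or> indep3 E")
    case True then show ?thesis by (rule R3[OF assms(1)])
  next
    case False
    then obtain S x y where S: "x \<in> S" "y \<notin> S" "\<forall>i j. E i j \<longleftrightarrow> (i \<noteq> j \<and> (i \<in> S \<longleftrightarrow> j \<in> S))"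
      using G2[OF assms(1) _ _ notcomplete] by blast
    then show ?thesis using iso_cobip[OF S] assms(5) by blast
  qed
  have s3: "3 \<le> rank (PM ?F)"
  proof (cases "P3 ?F \<or> indep3 ?F")
    case True then show ?thesis by (rule R3[OF sF])
  next
    case False
    have nc: "\<not> (\<forall>i j. i \<noteq> j \<longrightarrow> ?F i j)"
    proof
      assume "\<forall>i j. i \<noteq> j \<longrightarrow> ?F i j"
      then have H: "\<forall>i j. i \<noteq> j \<longrightarrow> \<not> E i j" by (auto simp: compl_graph_def)
      have "\<forall>i j. \<not> E i j"
      proof (intro allI)
        fix i j show "\<not> E i j"
        proof (cases "i = j")
          case True then show ?thesis using assms(1) by (simp add: simple_graph_def)
        next
          case False then show ?thesis using H by blast
        qed
      qed
      then show False using notempty by simp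
    qed
    obtain S x y where S: "x \<in> S" "y \<notin> S" "\<forall>i j. ?F i j \<longleftrightarrow> (i \<noteq> j \<and> (i \<in> S \<longleftrightarrow> j \<in> S))"
      using G2[OF sF _ _ nc] False by blast
    have "\<forall>i j. E i j \<longleftrightarrow> \<not> (i \<in> S \<longleftrightarrow> j \<in> S)"
    proof (intro allI)
      fix i j
      have irr: "\<not> E i i" using assms(1) by (auto simp: simple_graph_def)
      have "?F i j \<longleftrightarrow> (i \<noteq> j \<and> \<not> E i j)" by (simp add: compl_graph_def)
      then show "E i j \<longleftrightarrow> \<not> (i \<in> S \<longleftrightarrow> j \<in> S)" using S(3) irr by blast
    qed
    then show ?thesis using iso_bip[OF S(1,2)] assms(4) by blast
  qed
  have "rank (PM E) * rank (PM ?F) \<ge> 3 * (?n - 1)"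
  proof -
    obtain p q where pq: "rank (PM E) = 3 + p" "rank (PM ?F) = 3 + q"
      using r3 s3 by (metis le_iff_add)
    have "(3 + p) * (3 + q) = 9 + 3 * p + 3 * q + p * q" by (simp add: algebra_simps)
    then have "(3 + p) * (3 + q) \<ge> 9 + 3 * (p + q)" by simp
    moreover have "?n + 2 \<le> 6 + p + q" using rs pq by simp
    ultimately show ?thesis using pq by simp
  qed
  then show ?thesis by (simp add: PM_def)
qed

end
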